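(* Let $G$ be a bipartite permutation graph and let $I$ and $J$ be maximum independent sets of $G$. Suppose that there is a reconfiguration sequence between $I$ and $J$. Then there is a reconfiguration sequence of length $|I\setminus J|$ between $I$ and $J$.
   Context: A graph $G=(V,E)$ with $V=[n]$ is a permutation graph if there is a permutation $\pi:[n]\to[n]$ such that for $1\le i<j\le n$, $\{i,j\}\in E$ iff $\pi(i)>\pi(j)$. A reconfiguration sequence between independent sets $I$ and $J$ (with $|I|=|J|$) is a sequence of independent sets $I_0=I,I_1,\dots,I_\ell=J$ such that for each $1\le i\le \ell$, $I_i\setminus I_{i-1}=\{v\}$ and $I_{i-1}\setminus I_i=\{u\}$ for some vertices $u,v$; its length is $\ell$. *)

theory Defs
  imports Main
begin

definition perm_edge :: "(nat \<Rightarrow> nat) \<Rightarrow> nat \<Rightarrow> nat \<Rightarrow> bool" where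
  "perm_edge \<pi> u v \<longleftrightarrow> (u < v \<and> \<pi> u > \<pi> v) \<or> (v < u \<and> \<pi> v > \<pi> u)"

definition is_perm :: "nat \<Rightarrow> (nat \<Rightarrow> nat) \<Rightarrow> bool" where
  "is_perm n \<pi> \<longleftrightarrow> bij_betw \<pi> {1..n} {1..n}"

definition bipartite_graph :: "nat set \<Rightarrow> (nat \<Rightarrow> nat \<Rightarrow> bool) \<Rightarrow> bool" where
  "bipartite_graph V E \<longleftrightarrow> (\<exists>A B. A \<union> B = V \<and> A \<inter> B = {} \<and>
      (\<forall>u\<in>V. \<forall>v\<in>V. E u v \<longrightarrow> (u \<in> A \<longleftrightarrow> v \<in> B)))"

definition indep_set :: "nat set \<Rightarrow> (nat \<Rightarrow> nat \<Rightarrow> bool) \<Rightarrow> nat set \<Rightarrow> bool" where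
  "indep_set V E I \<longleftrightarrow> I \<subseteq> V \<and> (\<forall>u\<in>I. \<forall>v\<in>I. \<not> E u v)"

definition max_indep_set :: "nat set \<Rightarrow> (nat \<Rightarrow> nat \<Rightarrow> bool) \<Rightarrow> nat set \<Rightarrow> bool" where
  "max_indep_set V E I \<longleftrightarrow> indep_set V E I \<and>
      (\<forall>K. indep_set V E K \<longrightarrow> card K \<le> card I)"

definition reconf_seq :: "nat set \<Rightarrow> (nat \<Rightarrow> nat \<Rightarrow> bool) \<Rightarrow> nat set list \<Rightarrow> nat set \<Rightarrow> nat set \<Rightarrow> bool" where
  "reconf_seq V E S I J \<longleftrightarrow> S \<noteq> [] \<and> hd S = I \<and> last S = J \<and>
      (\<forall>K\<in>set S. indep_set V E K) \<and>
      (\<forall>i. Suc i < length S \<longrightarrow>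
         (\<exists>u v. S ! Suc i - S ! i = {v} \<and> S ! i - S ! Suc i = {u}))"

definition reconf_length :: "nat set list \<Rightarrow> nat" where
  "reconf_length S = length S - 1"

end

theory Submission
  imports Defs
begin

definition lt :: "(nat \<Rightarrow> nat) \<Rightarrow> nat \<Rightarrow> nat \<Rightarrow> bool" where
  "lt \<pi> a b \<longleftrightarrow> a < b \<and> \<pi> a < \<pi> b"

definition rk :: "nat set \<Rightarrow> nat \<Rightarrow> nat" where
  "rk K z = card {w\<in>K. w < z}"

definition elem :: "nat set \<Rightarrow> nat \<Rightarrow> nat" where
  "elem K r = (THE z. z \<in> K \<and> rk K z = r)"

lemma lt_trans: "lt \<pi> a b \<Longrightarrow> lt \<pi> b c \<Longrightarrow> lt \<pi> a c"
  by (auto simp: lt_def)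

lemma lt_noedge: "lt \<pi> a b \<Longrightarrow> \<not> perm_edge \<pi> a b \<and> \<not> perm_edge \<pi> b a"
  by (auto simp: lt_def perm_edge_def)

lemma edge_sym: "perm_edge \<pi> a b = perm_edge \<pi> b a"
  by (auto simp: perm_edge_def)

lemma edge_irrefl: "\<not> perm_edge \<pi> a a"
  by (auto simp: perm_edge_def)

lemma rk_mono: "finite K \<Longrightarrow> a \<in> K \<Longrightarrow> a < b \<Longrightarrow> rk K a < rk K b"
  unfolding rk_def by (rule psubset_card_mono) auto

lemma rk_less: "finite K \<Longrightarrow> z \<in> K \<Longrightarrow> rk K z < card K"
  unfolding rk_def by (rule psubset_card_mono) auto

lemma rk_inj: "finite K \<Longrightarrow> inj_on (rk K) K"
  by (metis inj_onI less_irrefl linorder_neqE_nat rk_mono)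

lemma rk_image: "finite K \<Longrightarrow> rk K ` K = {..<card K}"
proof -
  assume f: "finite K"
  have "rk K ` K \<subseteq> {..<card K}" using rk_less[OF f] by auto
  moreover have "card (rk K ` K) = card {..<card K}"
    using card_image[OF rk_inj[OF f]] by simp
  ultimately show ?thesis by (simp add: card_subset_eq)
qed

lemma elem_prop: "finite K \<Longrightarrow> r < card K \<Longrightarrow> elem K r \<in> K \<and> rk K (elem K r) = r"
proof -
  assume f: "finite K" and r: "r < card K"
  then obtain z where z: "z \<in> K" "rk K z = r" using rk_image[OF f]
    by (metis imageE lessThan_iff)
  have "elem K r = z" unfolding elem_def
    by (rule the_equality) (use z rk_inj[OF f] in \<open>auto simp: inj_on_def\<close>)
  with z show ?thesis by simp
qed

lemma elem_rk: "finite K \<Longrightarrow> z \<in> K \<Longrightarrow> elem K (rk K z) = z"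
  unfolding elem_def
  by (rule the_equality) (use rk_inj[of K] in \<open>auto simp: inj_on_def\<close>)

lemma card_le_rk: "finite K \<Longrightarrow> x \<in> K \<Longrightarrow> card {w\<in>K. w \<le> x} = rk K x + 1"
proof -
  assume f: "finite K" and x: "x \<in> K"
  have "{w\<in>K. w \<le> x} = insert x {w\<in>K. w < x}" using x by auto
  then show ?thesis using f by (simp add: rk_def)
qed

lemma card_ge_rk: "finite K \<Longrightarrow> card {w\<in>K. y \<le> w} = card K - rk K y"
proof -
  assume f: "finite K"
  have "{w\<in>K. y \<le> w} = K - {w\<in>K. w < y}" by auto
  then show ?thesis using f by (simp add: rk_def card_Diff_subset)
qed

lemma card_gt_rk: "finite K \<Longrightarrow> z \<in> K \<Longrightarrow> card {w\<in>K. z < w} = card K - rk K z - 1"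
proof -
  assume f: "finite K" and z: "z \<in> K"
  have "{w\<in>K. z < w} = {w\<in>K. z \<le> w} - {z}" by auto
  then show ?thesis using f z card_ge_rk[OF f, of z] by simp
qed

lemma reconf_cons:
  assumes "reconf_seq V E S K' J" "indep_set V E K" "K' - K = {v}" "K - K' = {u}"
  shows "reconf_seq V E (K # S) K J"
  unfolding reconf_seq_def
proof (intro conjI allI impI)
  have S: "S \<noteq> []" "hd S = K'" "last S = J" "\<forall>K\<in>set S. indep_set V E K"
    "\<forall>i. Suc i < length S \<longrightarrow> (\<exists>u v. S ! Suc i - S ! i = {v} \<and> S ! i - S ! Suc i = {u})"
    using assms(1) unfolding reconf_seq_def by auto
  show "K # S \<noteq> []" "hd (K # S) = K" by auto
  show "last (K # S) = J" using S by simp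
  show "\<forall>K\<in>set (K # S). indep_set V E K" using S assms(2) by auto
  fix i assume i: "Suc i < length (K # S)"
  show "\<exists>u v. (K # S) ! Suc i - (K # S) ! i = {v} \<and> (K # S) ! i - (K # S) ! Suc i = {u}"
  proof (cases i)
    case 0
    have "S ! 0 = K'" using S by (simp add: hd_conv_nth)
    then show ?thesis using 0 assms by auto
  next
    case (Suc j)
    then show ?thesis using S(5) i by auto
  qed
qed

lemma card_swap:
  assumes f: "finite K" and d1: "K' - K = {v}" and d2: "K - K' = {u}"
  shows "card K' = card K"
proof -
  have e: "K' = insert v (K - {u})" using d1 d2 by blast
  have nv: "v \<notin> K - {u}" using d1 by blast
  have u: "u \<in> K" using d2 by blast
  have "card K' = Suc (card (K - {u}))"
    unfolding e by (rule card_insert_disjoint) (use f nv in auto)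
  also have "card (K - {u}) = card K - 1" using card_Diff_singleton[OF u] .
  also have "card K > 0" using f u card_gt_0_iff by blast
  ultimately show ?thesis by simp
qed

locale bpg =
  fixes n :: nat and \<pi> :: "nat \<Rightarrow> nat"
  assumes perm: "is_perm n \<pi>"
    and bip: "bipartite_graph {1..n} (perm_edge \<pi>)"
begin

abbreviation "E \<equiv> perm_edge \<pi>"
abbreviation "mx K \<equiv> max_indep_set {1..n} E K"
abbreviation "ind K \<equiv> indep_set {1..n} E K"

lemma inj: "inj_on \<pi> {1..n}"
  using perm unfolding is_perm_def bij_betw_def by simp

lemma noedge_iff:
  assumes "a \<in> {1..n}" "b \<in> {1..n}" "a \<noteq> b"
  shows "\<not> E a b \<longleftrightarrow> (lt \<pi> a b \<or> lt \<pi> b a)"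
proof -
  have "\<pi> a \<noteq> \<pi> b" using inj_onD[OF inj, of a b] assms by auto
  then show ?thesis using assms(3) unfolding perm_edge_def lt_def by linarith
qed

lemma no_tri:
  assumes "a \<in> {1..n}" "b \<in> {1..n}" "c \<in> {1..n}" "E a b" "E b c" "E a c"
  shows False
proof -
  obtain A B where AB: "A \<union> B = {1..n}" "A \<inter> B = {}"
    "\<forall>u\<in>{1..n}. \<forall>v\<in>{1..n}. E u v \<longrightarrow> (u \<in> A \<longleftrightarrow> v \<in> B)"
    using bip unfolding bipartite_graph_def by blast
  have 1: "a \<in> A \<longleftrightarrow> b \<in> B" using AB(3) assms(1,2,4) by blast
  have 2: "b \<in> A \<longleftrightarrow> c \<in> B" using AB(3) assms(2,3,5) by blast
  have 3: "a \<in> A \<longleftrightarrow> c \<in> B" using AB(3) assms(1,3,6) by blast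
  note 1 2 3
  then show False using AB(1,2) assms(1-3) by blast
qed

lemma ind_fin: "ind K \<Longrightarrow> finite K"
  unfolding indep_set_def using finite_subset by blast

lemma ind_sub: "ind K \<Longrightarrow> K \<subseteq> {1..n}"
  unfolding indep_set_def by blast

lemma ind_noedge: "ind K \<Longrightarrow> a \<in> K \<Longrightarrow> b \<in> K \<Longrightarrow> \<not> E a b"
  unfolding indep_set_def by blast

lemma chain_lt: "ind K \<Longrightarrow> a \<in> K \<Longrightarrow> b \<in> K \<Longrightarrow> a < b \<Longrightarrow> lt \<pi> a b"
proof -
  assume h: "ind K" "a \<in> K" "b \<in> K" "a < b"
  then have "a \<in> {1..n}" "b \<in> {1..n}" using ind_sub by blast+
  then show ?thesis using noedge_iff[of a b] ind_noedge[OF h(1-3)] h(4)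
    by (auto simp: lt_def)
qed

lemma chain_le: "ind K \<Longrightarrow> a \<in> K \<Longrightarrow> b \<in> K \<Longrightarrow> a \<le> b \<Longrightarrow> a = b \<or> lt \<pi> a b"
  using chain_lt by force

lemma mx_ind: "mx K \<Longrightarrow> ind K"
  unfolding max_indep_set_def by blast

lemma mx_card: "mx K \<Longrightarrow> mx K' \<Longrightarrow> card K = card K'"
  unfolding max_indep_set_def by (meson le_antisym)

lemma mx_le: "mx K \<Longrightarrow> ind C \<Longrightarrow> card C \<le> card K"
  unfolding max_indep_set_def by blast

lemma mx_of_card: "mx K \<Longrightarrow> ind K' \<Longrightarrow> card K' = card K \<Longrightarrow> mx K'"
  unfolding max_indep_set_def by auto

lemma glue:
  assumes K: "mx K" and K': "mx K'" and x: "x \<in> K" and y: "y \<in> K'" and xy: "lt \<pi> x y"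
  shows "rk K x < rk K' y"
proof -
  define C where "C = {w\<in>K. w \<le> x} \<union> {w\<in>K'. y \<le> w}"
  have iK: "ind K" and iK': "ind K'" using K K' mx_ind by auto
  have fK: "finite K" and fK': "finite K'" using iK iK' ind_fin by auto
  have mixed: "lt \<pi> u v" if "u \<in> K" "u \<le> x" "v \<in> K'" "y \<le> v" for u v
    using chain_le[OF iK that(1) x that(2)] chain_le[OF iK' y that(3) that(4)] xy
    by (metis lt_trans)
  have "ind C"
    unfolding indep_set_def
  proof (intro conjI ballI)
    show "C \<subseteq> {1..n}" using ind_sub[OF iK] ind_sub[OF iK'] unfolding C_def by blast
    fix u v assume u: "u \<in> C" and v: "v \<in> C"
    show "\<not> E u v"
      using u v unfolding C_def
      using ind_noedge[OF iK, of u v] ind_noedge[OF iK', of u v] mixed[of u v] mixed[of v u]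
        lt_noedge[of \<pi> u v] lt_noedge[of \<pi> v u] by blast
  qed
  then have "card C \<le> card K" using mx_le[OF K] by blast
  moreover have "card C = card {w\<in>K. w \<le> x} + card {w\<in>K'. y \<le> w}"
    unfolding C_def
    by (rule card_Un_disjoint) (use fK fK' xy in \<open>auto simp: lt_def\<close>)
  moreover have "card K = card K'" using mx_card[OF K K'] .
  moreover have "rk K' y < card K'" using rk_less[OF fK' y] .
  ultimately show ?thesis using card_le_rk[OF fK x] card_ge_rk[OF fK', of y] by linarith
qed

lemma rank_le:
  assumes K: "mx K" and K': "mx K'" and x: "z \<in> K" and y: "z \<in> K'"
  shows "rk K z \<le> rk K' z"
proof -
  define C where "C = {w\<in>K. w \<le> z} \<union> {w\<in>K'. z < w}"
  have iK: "ind K" and iK': "ind K'" using K K' mx_ind by auto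
  have fK: "finite K" and fK': "finite K'" using iK iK' ind_fin by auto
  have mixed: "lt \<pi> u v" if "u \<in> K" "u \<le> z" "v \<in> K'" "z < v" for u v
    using chain_le[OF iK that(1) x that(2)] chain_lt[OF iK' y that(3) that(4)]
    by (metis lt_trans)
  have "ind C"
    unfolding indep_set_def
  proof (intro conjI ballI)
    show "C \<subseteq> {1..n}" using ind_sub[OF iK] ind_sub[OF iK'] unfolding C_def by blast
    fix u v assume u: "u \<in> C" and v: "v \<in> C"
    show "\<not> E u v"
      using u v unfolding C_def
      using ind_noedge[OF iK, of u v] ind_noedge[OF iK', of u v] mixed[of u v] mixed[of v u]
        lt_noedge[of \<pi> u v] lt_noedge[of \<pi> v u] by blast
  qed
  then have "card C \<le> card K" using mx_le[OF K] by blast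
  moreover have "card C = card {w\<in>K. w \<le> z} + card {w\<in>K'. z < w}"
    unfolding C_def
    by (rule card_Un_disjoint) (use fK fK' in auto)
  moreover have "card K = card K'" using mx_card[OF K K'] .
  moreover have "rk K' z < card K'" using rk_less[OF fK' y] .
  ultimately show ?thesis using card_le_rk[OF fK x] card_gt_rk[OF fK' y] by linarith
qed

lemma rank_eq: "mx K \<Longrightarrow> mx K' \<Longrightarrow> z \<in> K \<Longrightarrow> z \<in> K' \<Longrightarrow> rk K z = rk K' z"
  using rank_le by (meson le_antisym)

lemma same_level:
  assumes "mx K" "mx K'" "x \<in> K" "y \<in> K'" "rk K x = rk K' y" "x \<noteq> y"
  shows "E x y"
proof (rule ccontr)
  assume "\<not> E x y"
  then have "lt \<pi> x y \<or> lt \<pi> y x"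
    using noedge_iff[of x y] assms ind_sub mx_ind by blast
  then show False using glue[OF assms(1,2,3,4)] glue[OF assms(2,1,4,3)] assms(5) by auto
qed


lemma flip:
  assumes I: "mx I" and J: "mx J" and i: "i < card I"
    and ab: "elem I i \<noteq> elem J i"
    and L: "i = 0 \<or> \<not> E (elem I (i - 1)) (elem J i)"
    and R: "Suc i = card I \<or> \<not> E (elem J i) (elem I (Suc i))"
  shows "ind (insert (elem J i) (I - {elem I i}))" "elem I i \<notin> J" "elem J i \<notin> I"
proof -
  define a where "a = elem I i"
  define b where "b = elem J i"
  have iI: "ind I" and iJ: "ind J" using I J mx_ind by auto
  have fI: "finite I" and fJ: "finite J" using iI iJ ind_fin by auto
  have cIJ: "card I = card J" using mx_card[OF I J] .
  have a: "a \<in> I" "rk I a = i" using elem_prop[OF fI i] a_def by auto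
  have b: "b \<in> J" "rk J b = i" using elem_prop[OF fJ, of i] i cIJ b_def by auto
  have aJ: "a \<notin> J"
  proof
    assume "a \<in> J"
    then have "rk J a = i" using rank_eq[OF I J a(1)] a by simp
    then have "a = b" using rk_inj[OF fJ] b \<open>a \<in> J\<close> by (auto simp: inj_on_def)
    then show False using ab a_def b_def by simp
  qed
  have bI: "b \<notin> I"
  proof
    assume "b \<in> I"
    then have "rk I b = i" using rank_eq[OF J I b(1)] b by simp
    then have "a = b" using rk_inj[OF fI] a \<open>b \<in> I\<close> by (auto simp: inj_on_def)
    then show False using ab a_def b_def by simp
  qed
  have key: "lt \<pi> v b \<or> lt \<pi> b v" if v: "v \<in> I" "v \<noteq> a" for v
  proof -
    have rv: "rk I v \<noteq> i" using v a elem_rk[OF fI] by metis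
    have rvl: "rk I v < card I" using rk_less[OF fI v(1)] .
    show ?thesis
    proof (cases "rk I v < i")
      case True
      define c where "c = elem I (i - 1)"
      have c: "c \<in> I" "rk I c = i - 1" using elem_prop[OF fI, of "i - 1"] i c_def by auto
      have cb: "c \<noteq> b" using c bI by auto
      have "\<not> E c b" using L True c_def b_def by auto
      then have "lt \<pi> c b \<or> lt \<pi> b c"
        using noedge_iff[OF _ _ cb] ind_sub[OF iI] ind_sub[OF iJ] c(1) b(1) by blast
      moreover have "\<not> lt \<pi> b c" using glue[OF J I b(1) c(1)] b c True by auto
      ultimately have cb: "lt \<pi> c b" by blast
      have "\<not> c < v" using rk_mono[OF fI c(1)] c True by fastforce
      then have "v \<le> c" by simp
      then have "v = c \<or> lt \<pi> v c" using chain_le[OF iI v(1) c(1)] by blast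
      then show ?thesis using cb lt_trans by blast
    next
      case False
      then have gt: "i < rk I v" using rv by simp
      define d where "d = elem I (Suc i)"
      have si: "Suc i < card I" using gt rvl by simp
      have d: "d \<in> I" "rk I d = Suc i" using elem_prop[OF fI si] d_def by auto
      have db: "b \<noteq> d" using d bI by auto
      have "\<not> E b d" using R si d_def b_def by auto
      then have "lt \<pi> b d \<or> lt \<pi> d b"
        using noedge_iff[OF _ _ db] ind_sub[OF iI] ind_sub[OF iJ] d(1) b(1) by blast
      moreover have "\<not> lt \<pi> d b" using glue[OF I J d(1) b(1)] b d by auto
      ultimately have bd: "lt \<pi> b d" by blast
      have "\<not> v < d" using rk_mono[OF fI v(1)] d gt by fastforce
      then have "d \<le> v" by simp
      then have "d = v \<or> lt \<pi> d v" using chain_le[OF iI d(1) v(1)] by blast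
      then show ?thesis using bd lt_trans by blast
    qed
  qed
  show "ind (insert (elem J i) (I - {elem I i}))"
    unfolding indep_set_def a_def[symmetric] b_def[symmetric]
  proof (intro conjI ballI)
    show "insert b (I - {a}) \<subseteq> {1..n}" using ind_sub[OF iI] ind_sub[OF iJ] b(1) by blast
    fix u v assume u: "u \<in> insert b (I - {a})" and v: "v \<in> insert b (I - {a})"
    have ne: "\<not> E b w \<and> \<not> E w b" if "w \<in> I" "w \<noteq> a" for w
      using key[OF that] lt_noedge[of \<pi> w b] lt_noedge[of \<pi> b w] by blast
    show "\<not> E u v"
    proof (cases "u = b")
      case True
      then show ?thesis using v ne[of v] edge_irrefl[of \<pi> b] by auto
    next
      case False
      then have u': "u \<in> I" "u \<noteq> a" using u by auto
      show ?thesis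
      proof (cases "v = b")
        case True
        then show ?thesis using ne[OF u'] by auto
      next
        case False
        then show ?thesis using v u' ind_noedge[OF iI, of u v] by auto
      qed
    qed
  qed
  show "elem I i \<notin> J" "elem J i \<notin> I" using aJ bI a_def b_def by auto
qed

lemma repl:
  assumes I: "mx I" and J: "mx J" and K: "mx K" and K': "mx K'"
    and x: "x \<in> I" "x \<in> K" "x \<notin> K'" and x': "x' \<in> J" "rk I x = rk J x'" "x \<noteq> x'"
    and d1: "K - K' = {x}" and d2: "K' - K = {v}"
  shows "x' \<in> K'"
proof -
  have iK: "ind K" and iK': "ind K'" using K K' mx_ind by auto
  have fK: "finite K" and fK': "finite K'" using iK iK' ind_fin by auto
  have r: "rk K x < card K'" using rk_less[OF fK x(2)] mx_card[OF K K'] by simp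
  define w where "w = elem K' (rk K x)"
  have w: "w \<in> K'" "rk K' w = rk K x" using elem_prop[OF fK' r] w_def by auto
  have wv: "w = v"
  proof (rule ccontr)
    assume "w \<noteq> v"
    then have "w \<in> K" using w d2 by blast
    then have "rk K w = rk K x" using rank_eq[OF K K' \<open>w \<in> K\<close> w(1)] w by simp
    then have "w = x" using rk_inj[OF fK] \<open>w \<in> K\<close> x(2) by (auto simp: inj_on_def)
    then show False using w x by simp
  qed
  have v: "v \<in> K'" "rk K' v = rk J x'"
    using w wv rank_eq[OF I K x(1,2)] x' by auto
  have vx: "v \<noteq> x" using v x by auto
  show ?thesis
  proof (rule ccontr)
    assume "x' \<notin> K'"
    then have vx': "v \<noteq> x'" using v by auto
    have e1: "E v x" using same_level[OF K' I v(1) x(1) _ vx] v x' by simp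
    have e2: "E v x'" using same_level[OF K' J v(1) x'(1) v(2) vx'] .
    have e3: "E x x'" using same_level[OF I J x(1) x'(1) x'(2) x'(3)] .
    have "v \<in> {1..n}" "x \<in> {1..n}" "x' \<in> {1..n}"
      using v x x' ind_sub mx_ind I J K' by blast+
    then show False using no_tri e1 e2 e3 edge_sym by metis
  qed
qed

lemma blocked:
  assumes I: "mx I" and J: "mx J" and x: "x \<in> I" and y: "y \<in> I" and x': "x' \<in> J" and y': "y' \<in> J"
    and rx: "rk I x = rk J x'" and ry: "rk I y = rk J y'" and xx: "x \<noteq> x'" and yy: "y \<noteq> y'"
    and e1: "E x' y" and e2: "E x y'" and xy: "x \<noteq> y"
    and S: "reconf_seq {1..n} E S I J"
  shows False
proof -
  have S1: "S \<noteq> []" "hd S = I" "last S = J" "\<forall>K\<in>set S. ind K"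
    "\<forall>i. Suc i < length S \<longrightarrow> (\<exists>u v. S ! Suc i - S ! i = {v} \<and> S ! i - S ! Suc i = {u})"
    using S unfolding reconf_seq_def by auto
  have inv: "j < length S \<longrightarrow> mx (S ! j) \<and> x \<in> S ! j \<and> y \<in> S ! j" for j
  proof (induction j)
    case 0
    have "S ! 0 = I" using S1(1,2) hd_conv_nth by metis
    then show ?case using I x y by simp
  next
    case (Suc j)
    show ?case
    proof
      assume sj: "Suc j < length S"
      define K where "K = S ! j"
      define K' where "K' = S ! Suc j"
      have K: "mx K" "x \<in> K" "y \<in> K" using Suc sj K_def by auto
      obtain u v where uv: "K' - K = {v}" "K - K' = {u}" using S1(5) sj K_def K'_def by blast
      have iK': "ind K'" using S1(4) sj K'_def by auto
      have fK: "finite K" using K(1) mx_ind ind_fin by blast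
      have "card K' = card K" by (rule card_swap[OF fK uv])
      then have K': "mx K'" by (rule mx_of_card[OF K(1) iK'])
      have xin: "x \<in> K'"
      proof (rule ccontr)
        assume nx: "x \<notin> K'"
        then have "x \<in> K - K'" using K(2) by simp
        then have "u = x" using uv(2) by simp
        then have d: "K - K' = {x}" using uv(2) by simp
        have x'K: "x' \<in> K'" by (rule repl[OF I J K(1) K' x K(2) nx x' rx xx d uv(1)])
        have "y \<notin> K - K'" using uv(2) xy \<open>u = x\<close> by simp
        then have yK: "y \<in> K'" using K(3) by simp
        show False using ind_noedge[OF iK' x'K yK] e1 by simp
      qed
      have yin: "y \<in> K'"
      proof (rule ccontr)
        assume ny: "y \<notin> K'"
        then have "y \<in> K - K'" using K(3) by simp
        then have "u = y" using uv(2) by simp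
        then have d: "K - K' = {y}" using uv(2) by simp
        have y'K: "y' \<in> K'" by (rule repl[OF I J K(1) K' y K(3) ny y' ry yy d uv(1)])
        show False using ind_noedge[OF iK' xin y'K] e2 by simp
      qed
      show "mx (S ! Suc j) \<and> x \<in> S ! Suc j \<and> y \<in> S ! Suc j" using K' xin yin K'_def by simp
    qed
  qed
  have "last S = S ! (length S - 1)" using S1(1) by (rule last_conv_nth)
  then have xJ: "x \<in> J" using inv[of "length S - 1"] S1(1,3) by simp
  then have "rk J x = rk J x'" using rank_eq[OF I J x] rx by simp
  moreover have fJ: "finite J" using J mx_ind ind_fin by blast
  ultimately have "x = x'" using inj_onD[OF rk_inj[OF fJ] _ xJ x'] by blast
  then show False using xx by simp
qed


lemma good_pair:
  assumes I: "mx I" and J: "mx J" and ne: "I \<noteq> J" and S: "reconf_seq {1..n} E S I J"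
  shows "\<exists>a b. a \<in> I \<and> a \<notin> J \<and> b \<in> J \<and> b \<notin> I \<and> ind (insert b (I - {a}))"
proof -
  have iI: "ind I" and iJ: "ind J" using I J mx_ind by auto
  have fI: "finite I" and fJ: "finite J" using iI iJ ind_fin by auto
  have cIJ: "card J = card I" using mx_card[OF J I] .
  define D where "D = {i. i < card I \<and> elem I i \<noteq> elem J i}"
  have "\<not> I \<subseteq> J"
  proof
    assume "I \<subseteq> J"
    then have "I = J" using card_subset_eq[OF fJ] cIJ by simp
    then show False using ne by simp
  qed
  then obtain z where z: "z \<in> I" "z \<notin> J" by blast
  have rz: "rk I z < card I" using rk_less[OF fI z(1)] .
  have "elem I (rk I z) = z" using elem_rk[OF fI z(1)] .
  moreover have "elem J (rk I z) \<in> J" using elem_prop[OF fJ, of "rk I z"] rz cIJ by simp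
  ultimately have "rk I z \<in> D" using z rz unfolding D_def by auto
  then have Dne: "D \<noteq> {}" by auto
  have fD: "finite D" unfolding D_def by simp
  define Ss where "Ss = {i\<in>D. i = 0 \<or> \<not> E (elem I (i - 1)) (elem J i)}"
  have fS: "finite Ss" using fD unfolding Ss_def by simp
  define p where "p = Min D"
  have pD: "p \<in> D" using Min_in[OF fD Dne] p_def by simp
  have "p \<in> Ss"
  proof (cases "p = 0")
    case True
    then show ?thesis using pD unfolding Ss_def by simp
  next
    case False
    have "p - 1 \<notin> D"
    proof
      assume "p - 1 \<in> D"
      then have "p \<le> p - 1" using Min_le[OF fD] p_def by simp
      then show False using False by simp
    qed
    moreover have "p - 1 < card I" using pD unfolding D_def by auto
    ultimately have eq: "elem I (p - 1) = elem J (p - 1)" unfolding D_def by auto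
    have "elem J (p - 1) \<in> J" "elem J p \<in> J"
      using elem_prop[OF fJ, of "p - 1"] elem_prop[OF fJ, of p] pD cIJ unfolding D_def by auto
    then have "\<not> E (elem I (p - 1)) (elem J p)" using eq ind_noedge[OF iJ] by simp
    then show ?thesis using pD unfolding Ss_def by simp
  qed
  then have Sne: "Ss \<noteq> {}" by auto
  define i where "i = Max Ss"
  have iS: "i \<in> Ss" using Max_in[OF fS Sne] i_def by simp
  then have iD: "i \<in> D" and L: "i = 0 \<or> \<not> E (elem I (i - 1)) (elem J i)" unfolding Ss_def by auto
  then have il: "i < card I" and ab: "elem I i \<noteq> elem J i" unfolding D_def by auto
  show ?thesis
  proof (cases "Suc i = card I \<or> \<not> E (elem J i) (elem I (Suc i))")
    case True
    note fl = flip[OF I J il ab L True]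
    have "elem I i \<in> I" "elem J i \<in> J"
      using elem_prop[OF fI il] elem_prop[OF fJ, of i] il cIJ by auto
    then show ?thesis using fl by blast
  next
    case False
    then have si: "Suc i < card I" and e1: "E (elem J i) (elem I (Suc i))" using il by auto
    have x: "elem I i \<in> I" "rk I (elem I i) = i" using elem_prop[OF fI il] by auto
    have y: "elem I (Suc i) \<in> I" "rk I (elem I (Suc i)) = Suc i" using elem_prop[OF fI si] by auto
    have x': "elem J i \<in> J" "rk J (elem J i) = i" using elem_prop[OF fJ, of i] il cIJ by auto
    have y': "elem J (Suc i) \<in> J" "rk J (elem J (Suc i)) = Suc i"
      using elem_prop[OF fJ, of "Suc i"] si cIJ by auto
    have sD: "Suc i \<in> D"
    proof (rule ccontr)
      assume "Suc i \<notin> D"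
      then have "elem I (Suc i) = elem J (Suc i)" using si unfolding D_def by auto
      then show False using e1 ind_noedge[OF iJ x'(1) y'(1)] by simp
    qed
    have "Suc i \<notin> Ss"
    proof
      assume "Suc i \<in> Ss"
      then have "Suc i \<le> i" using Max_ge[OF fS] i_def by simp
      then show False by simp
    qed
    then have e2: "E (elem I i) (elem J (Suc i))" using sD unfolding Ss_def by simp
    have yy: "elem I (Suc i) \<noteq> elem J (Suc i)" using sD unfolding D_def by simp
    have xy: "elem I i \<noteq> elem I (Suc i)" using x(2) y(2) by auto
    have False
      using blocked[OF I J x(1) y(1) x'(1) y'(1) _ _ ab yy e1 e2 xy S] x y x' y' by simp
    then show ?thesis ..
  qed
qed

lemma main:
  assumes J: "mx J"
  shows "mx I \<Longrightarrow> card (I - J) = k \<Longrightarrow> reconf_seq {1..n} E S I J \<Longrightarrow>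
    \<exists>S'. reconf_seq {1..n} E S' I J \<and> reconf_length S' = k"
proof (induction k arbitrary: I S)
  case 0
  have fI: "finite I" and fJ: "finite J" using 0(1) J mx_ind ind_fin by auto
  have "I \<subseteq> J" using 0(2) fI by auto
  then have IJ: "I = J" using card_subset_eq[OF fJ] mx_card[OF J 0(1)] by simp
  have "reconf_seq {1..n} E [I] I J"
    using IJ mx_ind[OF 0(1)] unfolding reconf_seq_def by auto
  moreover have "reconf_length [I] = 0" unfolding reconf_length_def by simp
  ultimately show ?case by blast
next
  case (Suc k)
  have I: "mx I" using Suc.prems(1) .
  have fI: "finite I" using I mx_ind ind_fin by auto
  have "I \<noteq> J" using Suc.prems(2) by auto
  then obtain a b where ab: "a \<in> I" "a \<notin> J" "b \<in> J" "b \<notin> I" and ind': "ind (insert b (I - {a}))"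
    using good_pair[OF I J _ Suc.prems(3)] by blast
  define I' where "I' = insert b (I - {a})"
  have d1: "I' - I = {b}" and d2: "I - I' = {a}" using ab unfolding I'_def by auto
  have "card I' = card I" by (rule card_swap[OF fI d1 d2])
  then have I': "mx I'" using mx_of_card[OF I] ind' I'_def by simp
  have "I' - J = (I - J) - {a}" using ab unfolding I'_def by auto
  then have cI': "card (I' - J) = k" using Suc.prems(2) ab fI by simp
  have r': "reconf_seq {1..n} E (I' # S) I' J"
    by (rule reconf_cons[OF Suc.prems(3) ind'[folded I'_def] d2 d1])
  obtain S1 where S1: "reconf_seq {1..n} E S1 I' J" "reconf_length S1 = k"
    using Suc.IH[OF I' cI' r'] by blast
  have r: "reconf_seq {1..n} E (I # S1) I J"
    by (rule reconf_cons[OF S1(1) mx_ind[OF I] d1 d2])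
  have "S1 \<noteq> []" using S1(1) unfolding reconf_seq_def by simp
  then have "reconf_length (I # S1) = Suc k" using S1(2) unfolding reconf_length_def by (cases S1) auto
  then show ?case using r by blast
qed

end

theorem theorem2:
  fixes n :: nat and \<pi> :: "nat \<Rightarrow> nat" and I J :: "nat set"
  assumes "is_perm n \<pi>"
    and "bipartite_graph {1..n} (perm_edge \<pi>)"
    and "max_indep_set {1..n} (perm_edge \<pi>) I"
    and "max_indep_set {1..n} (perm_edge \<pi>) J"
    and "\<exists>S. reconf_seq {1..n} (perm_edge \<pi>) S I J"
  shows "\<exists>S. reconf_seq {1..n} (perm_edge \<pi>) S I J \<and> reconf_length S = card (I - J)"
proof -
  interpret bpg n \<pi> using assms(1,2) by unfold_locales
  obtain S where "reconf_seq {1..n} (perm_edge \<pi>) S I J" using assms(5) by blast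
  then show ?thesis using main[OF assms(4) assms(3) refl] by blast
qed

end
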